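(* Fix $\tilde r^2>0$, $\tilde\sigma^2>0$ (an observational family) and $\gamma\in(0,\infty)$. Then the optimal causal regularization $\lambda_C(\gamma)$ depends on the causal model only through its confounding strength $\zeta$. With $$\rho(\gamma,\mathrm{SNR}_{\rm stat})=-\mathrm{SNR}_{\rm stat}^{-1}\frac{\gamma\max\{1,\gamma\}}{(1-\gamma)^2}$$ (interpreted as $-\infty$ when $\gamma=1$), the following hold: - if $\zeta\le\rho(\gamma,\mathrm{SNR}_{\rm stat})$, then $\lambda_C=0$; - if $\rho(\gamma,\mathrm{SNR}_{\rm stat})<\zeta<1$, then $\lambda_C\in(0,\infty)$ and $\lambda_C$ is a differentiable function of $\zeta$ with $\partial_\zeta\lambda_C(\gamma)>0$; - if $\zeta\ge1$, then $\lambda_C=\infty$.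
   Context: Setting: isotropic linear causal models $z\sim\mathcal N(0,I_l)$, $\varepsilon\sim\mathcal N(0,\sigma^2)$, $x=Mz$ with $MM^T=I_d$, and $y=x^T\beta+z^T\alpha+\varepsilon$. Write $\Gamma=M\alpha$, $\tilde\beta=\beta+\Gamma$ and $\tilde\sigma^2=\sigma^2+\|\alpha\|^2-\|\Gamma\|^2$. Asymptotically the model is summarized by constants $\|\beta\|^2=r^2$, $\|\Gamma\|^2=\omega^2$, $\langle\Gamma,\beta\rangle=\eta$ and $\tilde\sigma^2$, with $\tilde r^2=r^2+\omega^2+2\eta$. Observational family: models entailing the same observational distribution share $\tilde r^2$ and $\tilde\sigma^2$, while $(\omega^2,\eta)$ vary. Derived quantities: confounding strength $\zeta=(\omega^2+\eta)/\tilde r^2$ and $\mathrm{SNR}_{\rm stat}=\tilde r^2/\tilde\sigma^2$. Limiting causal risk of ridge regression with parameter $\lambda>0$ at ratio $\gamma=\lim d/n$: $$\mathcal R_\lambda(\gamma)=\omega^2+\tilde r^2\lambda^2m'(-\lambda)-2(\omega^2+\eta)\lambda m(-\lambda)+\tilde\sigma^2\gamma\big(m(-\lambda)-\lambda m'(-\lambda)\big)+\tilde\sigma^2+\omega^2,$$ where $m(z)=\frac{(1-\gamma-z)-\sqrt{(1-\gamma-z)^2-4\gamma z}}{2\gamma z}$ and $m'$ is its derivative. Optimal causal regularization: $\lambda_C(\gamma)=\arg\inf_{\lambda\in(0,\infty)}\mathcal R_\lambda(\gamma)$. By convention $\lambda_C=0$ if the infimum is attained only as $\lambda\to0^+$,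 and $\lambda_C=\infty$ if it is attained only as $\lambda\to\infty$. *)

theory Defs
  imports "HOL-Analysis.Analysis"
begin

text \<open>Stieltjes transform of the Marchenko-Pastur law with ratio gamma, evaluated at real z (used at z = -lambda < 0).\<close>
definition mp_m :: "real \<Rightarrow> real \<Rightarrow> real" where
  "mp_m \<gamma> z = ((1 - \<gamma> - z) - sqrt ((1 - \<gamma> - z)^2 - 4 * \<gamma> * z)) / (2 * \<gamma> * z)"

text \<open>Limiting causal risk of ridge regression with parameter lambda, for a model with
  constants r2t = tilde r^2, s2t = tilde sigma^2, w2 = omega^2 and eta.\<close>
definition causal_risk :: "real \<Rightarrow> real \<Rightarrow> real \<Rightarrow> real \<Rightarrow> real \<Rightarrow> real \<Rightarrow> real" where
  "causal_risk \<gamma> r2t s2t w2 \<eta> lam =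
     w2 + r2t * lam^2 * deriv (mp_m \<gamma>) (-lam)
        - 2 * (w2 + \<eta>) * lam * mp_m \<gamma> (-lam)
        + s2t * \<gamma> * (mp_m \<gamma> (-lam) - lam * deriv (mp_m \<gamma>) (-lam))
        + s2t + w2"

definition conf_strength :: "real \<Rightarrow> real \<Rightarrow> real \<Rightarrow> real" where
  "conf_strength r2t w2 \<eta> = (w2 + \<eta>) / r2t"

definition rho_thr :: "real \<Rightarrow> real \<Rightarrow> ereal" where
  "rho_thr \<gamma> snr = (if \<gamma> = 1 then -\<infinity>
      else ereal (- (1 / snr) * (\<gamma> * max 1 \<gamma>) / (1 - \<gamma>)^2))"

text \<open>Admissible model constants in the observational family with given r2t:
  omega^2 >= 0, r^2 = r2t - omega^2 - 2 eta >= 0 and Cauchy-Schwarz eta^2 <= r^2 omega^2.\<close>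
definition admissible :: "real \<Rightarrow> real \<Rightarrow> real \<Rightarrow> bool" where
  "admissible r2t w2 \<eta> \<longleftrightarrow> w2 \<ge> 0 \<and> r2t - w2 - 2 * \<eta> \<ge> 0 \<and> \<eta>^2 \<le> (r2t - w2 - 2 * \<eta>) * w2"

end

theory Submission
  imports Defs "HOL-Real_Asymp.Real_Asymp"
begin


definition QQ :: "real \<Rightarrow> real \<Rightarrow> real" where "QQ g l = l^2 + 2*(1+g)*l + (1-g)^2"
definition SS :: "real \<Rightarrow> real \<Rightarrow> real" where "SS g l = sqrt (QQ g l)"
definition gg :: "real \<Rightarrow> real \<Rightarrow> real" where "gg g l = (SS g l - l - 1 + g)/(2*g)"
definition G1 :: "real \<Rightarrow> real \<Rightarrow> real" where "G1 g l = (l + 1 + g - SS g l)/(2*g*SS g l)"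
definition EE :: "real \<Rightarrow> real \<Rightarrow> real \<Rightarrow> real \<Rightarrow> real \<Rightarrow> real \<Rightarrow> real" where
  "EE g r2t s2t w2 \<eta> l = 2*w2 + s2t + r2t*(gg g l - l*G1 g l) - 2*(w2+\<eta>)*gg g l + s2t*g*G1 g l"
definition phi :: "real \<Rightarrow> real \<Rightarrow> real \<Rightarrow> real" where
  "phi g s l = (l - s)*(l + 1 + g + SS g l)/(2*QQ g l)"

lemma QQ_pos: "g > 0 \<Longrightarrow> l > 0 \<Longrightarrow> QQ g l > 0"
  unfolding QQ_def by (simp add: add_pos_nonneg)

lemma mp_m_deriv:
  assumes g: "g > 0" and l: "l > 0"
  shows "(mp_m g has_real_derivative (gg g l - l*G1 g l)/l^2) (at (-l))"
proof -
  have Q: "(1-g-(-l))^2 - 4*g*(-l) = QQ g l" by (simp add: QQ_def power2_eq_square algebra_simps)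
  have Qp: "QQ g l > 0" using QQ_pos g l by auto
  have Q': "(1-g+l)^2 + 4*g*l = QQ g l" by (simp add: QQ_def power2_eq_square algebra_simps)
  have Sp: "SS g l > 0" using Qp by (simp add: SS_def)
  show ?thesis
    unfolding mp_m_def[abs_def]
    using g l Qp Sp apply (auto intro!: derivative_eq_intros simp: Q Q')
    using g l Sp apply (simp add: SS_def[symmetric] gg_def G1_def field_simps)
    apply (simp add: algebra_simps power2_eq_square)
    done
qed

lemma deriv_eq: "(f has_real_derivative a) F \<Longrightarrow> a = b \<Longrightarrow> (f has_real_derivative b) F"
  by simp

lemma SS_sq: "QQ g l > 0 \<Longrightarrow> SS g l ^ 2 = QQ g l"
  by (simp add: SS_def)
lemma SS_pos: "QQ g l > 0 \<Longrightarrow> SS g l > 0"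
  by (simp add: SS_def)
lemma SS_lt: assumes "g > 0" "QQ g l > 0" "l \<ge> 0" shows "SS g l < l + 1 + g"
proof -
  have "QQ g l < (l+1+g)^2" using assms by (simp add: QQ_def power2_eq_square algebra_simps)
  hence "sqrt (QQ g l) < sqrt ((l+1+g)^2)" by (rule real_sqrt_less_mono)
  thus ?thesis unfolding SS_def using assms by simp
qed
lemma SS_gt: assumes "g > 0" "QQ g l > 0" "l \<ge> 0" shows "SS g l > l"
proof -
  have "l^2 < QQ g l" using assms unfolding QQ_def
    by (cases "l = 0") (auto simp: power2_eq_square intro!: add_pos_nonneg)
  hence "sqrt (l^2) < sqrt (QQ g l)" by (rule real_sqrt_less_mono)
  thus ?thesis unfolding SS_def using assms by simp
qed

lemma QQ_deriv: "(QQ g has_real_derivative 2*(l+1+g)) (at l)"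
  unfolding QQ_def[abs_def]
  by (auto intro!: derivative_eq_intros simp: algebra_simps)

lemma SS_deriv: assumes "QQ g l > 0"
  shows "(SS g has_real_derivative (l+1+g)/SS g l) (at l)"
proof -
  have d: "((\<lambda>x. sqrt (QQ g x)) has_real_derivative inverse (sqrt (QQ g l)) / 2 * (2*(l+1+g))) (at l)"
    by (rule DERIV_chain2[OF DERIV_real_sqrt QQ_deriv]) (use assms in auto)
  have e: "inverse (sqrt (QQ g l)) / 2 * (2*(l+1+g)) = (l+1+g)/SS g l"
    using assms by (simp add: SS_def field_simps)
  show ?thesis using deriv_eq[OF d e] unfolding SS_def[abs_def] .
qed

lemma SS_chain[derivative_intros]:
  assumes "QQ g (f x) > 0" "(f has_real_derivative f') (at x within X)"
  shows "((\<lambda>x. SS g (f x)) has_real_derivative (f x+1+g)/SS g (f x) * f') (at x within X)"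
  by (rule DERIV_chain2[OF SS_deriv[OF assms(1)] assms(2)])

lemma gg_deriv: assumes "g > 0" "QQ g l > 0"
  shows "(gg g has_real_derivative G1 g l) (at l)"
  unfolding gg_def[abs_def] G1_def using assms SS_pos[OF assms(2)]
  by (auto intro!: derivative_eq_intros simp: field_simps)

lemma G1_alg: fixes S g l :: real
  assumes "S > 0" "g > 0" "S^2 = l^2 + 2*(1+g)*l + (1-g)^2"
  shows "((1 - (l + 1 + g) / S) * (2 * g * S) - (l + 1 + g - S) * ((l + 1 + g) * (2 * g)) / S) /
        (4 * (g * (S * (g * S)))) = - (2 / S ^ 3)"
proof -
  have "(1 - (l + 1 + g) / S) * (2 * g * S) - (l + 1 + g - S) * ((l + 1 + g) * (2 * g)) / S
      = 2*g*(S^2 - (l+1+g)^2)/S" using assms by (simp add: field_simps power2_eq_square)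
  also have "\<dots> = 2*g*(-4*g)/S"
  proof -
    have h: "S^2 - (l+1+g)^2 = -4*g" using assms(3) by (simp add: power2_eq_square algebra_simps)
    show ?thesis by (simp only: h)
  qed
  finally have eq: "(1 - (l + 1 + g) / S) * (2 * g * S) - (l + 1 + g - S) * ((l + 1 + g) * (2 * g)) / S = 2*g*(-4*g)/S" .
  show ?thesis apply (simp only: eq) using assms(1,2) by (simp add: field_simps power2_eq_square power3_eq_cube)
qed

lemma G1_deriv: assumes "g > 0" "QQ g l > 0"
  shows "(G1 g has_real_derivative -2/(SS g l)^3) (at l)"
  unfolding G1_def[abs_def] using assms SS_pos[OF assms(2)]
  apply (auto intro!: derivative_eq_intros)
  apply (rule G1_alg)
  using SS_sq[OF assms(2)] by (auto simp: QQ_def)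
lemma gg_chain[derivative_intros]:
  assumes "g > 0" "QQ g (f x) > 0" "(f has_real_derivative f') (at x within X)"
  shows "((\<lambda>x. gg g (f x)) has_real_derivative G1 g (f x) * f') (at x within X)"
  by (rule DERIV_chain2[OF gg_deriv[OF assms(1,2)] assms(3)])

lemma G1_chain[derivative_intros]:
  assumes "g > 0" "QQ g (f x) > 0" "(f has_real_derivative f') (at x within X)"
  shows "((\<lambda>x. G1 g (f x)) has_real_derivative -2/(SS g (f x))^3 * f') (at x within X)"
  by (rule DERIV_chain2[OF G1_deriv[OF assms(1,2)] assms(3)])

lemma EE_alg: fixes S g l r2t s2t w2 \<eta> :: real
  assumes "S > 0" "g > 0" "r2t > 0" "S^2 = Q" "Q = l^2 + 2*(1+g)*l + (1-g)^2"
  shows "r2t * ((l + 1 + g - S)/(2*g*S) - ((l + 1 + g - S)/(2*g*S) + l * (-2/S^3)))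
         - 2*(w2+\<eta>)*((l + 1 + g - S)/(2*g*S)) + s2t*g*(-2/S^3)
       = 2*r2t*((l + 1 + g - S)/(2*g*S))*((l - s2t*g/r2t)*(l + 1 + g + S)/(2*Q) - (w2+\<eta>)/r2t)"
proof -
  have AB: "(l+1+g-S)*(l+1+g+S) = 4*g" using assms(4,5) by (simp add: power2_eq_square algebra_simps)
  have Qp: "Q > 0" using assms by (metis zero_less_power)
  have "2*r2t*((l + 1 + g - S)/(2*g*S))*((l - s2t*g/r2t)*(l + 1 + g + S)/(2*Q) - (w2+\<eta>)/r2t)
     = (r2t*l - s2t*g)*((l+1+g-S)*(l+1+g+S))/(2*g*S*Q) - 2*(w2+\<eta>)*((l + 1 + g - S)/(2*g*S))"
    using assms(1,2,3) Qp by (simp add: field_simps)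
  also have "\<dots> = (r2t*l - s2t*g)*(4*g)/(2*g*S*Q) - 2*(w2+\<eta>)*((l + 1 + g - S)/(2*g*S))"
    by (simp only: AB)
  also have "\<dots> = r2t * ((l + 1 + g - S)/(2*g*S) - ((l + 1 + g - S)/(2*g*S) + l * (-2/S^3)))
         - 2*(w2+\<eta>)*((l + 1 + g - S)/(2*g*S)) + s2t*g*(-2/S^3)"
  proof -
    have QS: "Q = S^2" using assms(4) by simp
    have S0: "S \<noteq> 0" "g \<noteq> 0" "r2t \<noteq> 0" using assms(1,2,3) by auto
    show ?thesis apply (simp only: QS) using S0 by (simp add: field_simps power2_eq_square power3_eq_cube)
  qed
  finally show ?thesis by simp
qed

lemma EE_deriv: assumes "g > 0" "QQ g l > 0" "r2t > 0"
  shows "(EE g r2t s2t w2 \<eta> has_real_derivative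
            2*r2t*G1 g l*(phi g (s2t*g/r2t) l - (w2+\<eta>)/r2t)) (at l)"
proof -
  have d: "(EE g r2t s2t w2 \<eta> has_real_derivative
      r2t * (G1 g l - (G1 g l + l * (-2/(SS g l)^3))) - 2*(w2+\<eta>)*G1 g l + s2t*g*(-2/(SS g l)^3)) (at l)"
    unfolding EE_def[abs_def] using assms
    by (auto intro!: derivative_eq_intros simp: field_simps)
  show ?thesis apply (rule deriv_eq[OF d])
    unfolding G1_def phi_def
    apply (rule EE_alg)
    using assms SS_pos[OF assms(2)] SS_sq[OF assms(2)] by (auto simp: QQ_def)
qed
definition phiD :: "real \<Rightarrow> real \<Rightarrow> real \<Rightarrow> real" where
  "phiD g s l = (l+1+g+SS g l)/(2*(SS g l)^4)*((1-g)^2 + l*(SS g l - l) + s*(2*(l+1+g) - SS g l))"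

lemma QQ_chain[derivative_intros]:
  assumes "(f has_real_derivative f') (at x within X)"
  shows "((\<lambda>x. QQ g (f x)) has_real_derivative 2*(f x+1+g) * f') (at x within X)"
  by (rule DERIV_chain2[OF QQ_deriv assms])

lemma phi_alg: fixes S Q g l s :: real
  assumes "S > 0" "S^2 = Q" "Q = l^2+2*(1+g)*l+(1-g)^2"
  shows "((l + 1 + g + S + (1 + (l + 1 + g) / S) * (l - s)) * (2 * Q) -
         (l - s) * (l + 1 + g + S) * (4 * l + 4 + 4 * g)) / (4 * (Q * Q))
       = (l+1+g+S)/(2*S^4)*((1-g)^2 + l*(S - l) + s*(2*(l+1+g) - S))"
proof -
  have b: "(1-g)^2 = S^2 - l^2 - 2*(1+g)*l" using assms(2,3) by simp
  have QS: "Q = S^2" using assms(2) by simp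
  show ?thesis apply (simp only: b QS) using assms(1)
    by (simp add: field_simps power2_eq_square power4_eq_xxxx)
qed

lemma phi_deriv: assumes "g > 0" "QQ g l > 0"
  shows "(phi g s has_real_derivative phiD g s l) (at l)"
  unfolding phi_def[abs_def] using assms SS_pos[OF assms(2)]
  apply (auto intro!: derivative_eq_intros)
  unfolding phiD_def apply (rule phi_alg)
  using SS_pos[OF assms(2)] SS_sq[OF assms(2)] by (auto simp: QQ_def)

lemma phiD_pos: assumes "g > 0" "s > 0" "l \<ge> 0" "QQ g l > 0"
  shows "phiD g s l > 0"
proof -
  have S: "SS g l > 0" "SS g l < l+1+g" "SS g l > l" using SS_pos SS_lt SS_gt assms by auto
  have "(1-g)^2 + l*(SS g l - l) + s*(2*(l+1+g) - SS g l) > 0"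
    using S assms by (intro add_nonneg_pos add_nonneg_nonneg) auto
  thus ?thesis unfolding phiD_def using S assms by (intro mult_pos_pos divide_pos_pos) auto
qed

lemma G1_pos: assumes "g > 0" "l \<ge> 0" "QQ g l > 0" shows "G1 g l > 0"
  using SS_pos SS_lt assms unfolding G1_def by (auto intro!: divide_pos_pos)

lemma phi_lt1: assumes "g > 0" "s > 0" "l > 0" shows "phi g s l < 1"
proof -
  have Q: "QQ g l > 0" using QQ_pos assms by auto
  have S: "SS g l > 0" "SS g l < l+1+g" using SS_pos SS_lt assms Q by auto
  have "(l - s)*(l + 1 + g + SS g l) < l*(l + 1 + g + SS g l)"
    using S assms by (intro mult_strict_right_mono) auto
  also have "\<dots> \<le> l*(l+1+g + (l+1+g))" using S assms by (intro mult_left_mono) auto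
  also have "\<dots> \<le> 2*QQ g l"
  proof -
    have e: "2*QQ g l - l*(l+1+g+(l+1+g)) = 2*(1+g)*l + 2*(1-g)^2"
      by (simp add: QQ_def power2_eq_square algebra_simps)
    have "2*(1+g)*l + 2*(1-g)^2 \<ge> 0" using assms by simp
    thus ?thesis using e by linarith
  qed
  finally show ?thesis unfolding phi_def using Q by simp
qed

lemma mp_m_eq: assumes "g > 0" "l > 0" shows "mp_m g (-l) = gg g l / l"
proof -
  have Q: "(1-g-(-l))^2 - 4*g*(-l) = QQ g l" by (simp add: QQ_def power2_eq_square algebra_simps)
  show ?thesis unfolding mp_m_def Q SS_def[symmetric] gg_def using assms
    by (simp add: field_simps)
qed

lemma risk_eq: assumes "g > 0" "l > 0"
  shows "causal_risk g r2t s2t w2 \<eta> l = EE g r2t s2t w2 \<eta> l"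
proof -
  have d: "deriv (mp_m g) (-l) = (gg g l - l*G1 g l)/l^2"
    by (rule DERIV_imp_deriv[OF mp_m_deriv[OF assms]])
  show ?thesis unfolding causal_risk_def EE_def d mp_m_eq[OF assms] using assms
    by (simp add: field_simps power2_eq_square)
qed

lemma gg_top: "g > 0 \<Longrightarrow> (gg g \<longlongrightarrow> 1) at_top"
  unfolding gg_def[abs_def] SS_def QQ_def by (real_asymp simp: field_simps)
lemma G1_top: "g > 0 \<Longrightarrow> (G1 g \<longlongrightarrow> 0) at_top"
  unfolding G1_def[abs_def] SS_def QQ_def by real_asymp
lemma lG1_top: "g > 0 \<Longrightarrow> ((\<lambda>l. l * G1 g l) \<longlongrightarrow> 0) at_top"
  unfolding G1_def[abs_def] SS_def QQ_def by real_asymp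
lemma phi_top: "g > 0 \<Longrightarrow> (phi g s \<longlongrightarrow> 1) at_top"
  unfolding phi_def[abs_def] SS_def QQ_def by real_asymp

lemma EE_top: assumes "g > 0"
  shows "(EE g r2t s2t w2 \<eta> \<longlongrightarrow> 2*w2 + s2t + r2t - 2*(w2+\<eta>)) at_top"
proof -
  have "((\<lambda>l. 2*w2 + s2t + r2t*(gg g l - l*G1 g l) - 2*(w2+\<eta>)*gg g l + s2t*g*G1 g l)
     \<longlongrightarrow> 2*w2 + s2t + r2t*(1 - 0) - 2*(w2+\<eta>)*1 + s2t*g*0) at_top"
    by (intro tendsto_intros gg_top G1_top lG1_top assms)
  thus ?thesis unfolding EE_def[abs_def] by simp
qed



lemma incr_on: fixes f f' :: "real \<Rightarrow> real"
  assumes "a < b" "\<And>x. a \<le> x \<Longrightarrow> x \<le> b \<Longrightarrow> (f has_real_derivative f' x) (at x)"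
    "\<And>x. a < x \<Longrightarrow> x < b \<Longrightarrow> f' x > 0"
  shows "f a < f b"
proof (rule DERIV_pos_imp_increasing_open[OF assms(1)])
  fix x assume x: "a<x" "x<b"
  show "\<exists>y. DERIV f x :> y \<and> y>0" using assms(2)[of x] assms(3)[OF x] x by (intro exI[of _ "f' x"]) auto
next
  show "continuous_on {a..b} f"
    by (rule continuous_at_imp_continuous_on) (auto intro: DERIV_isCont[OF assms(2)])
qed

lemma decr_on: fixes f f' :: "real \<Rightarrow> real"
  assumes "a < b" "\<And>x. a \<le> x \<Longrightarrow> x \<le> b \<Longrightarrow> (f has_real_derivative f' x) (at x)"
    "\<And>x. a < x \<Longrightarrow> x < b \<Longrightarrow> f' x < 0"
  shows "f a > f b"
proof (rule DERIV_neg_imp_decreasing_open[OF assms(1)])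
  fix x assume x: "a<x" "x<b"
  show "\<exists>y. DERIV f x :> y \<and> y<0" using assms(2)[of x] assms(3)[OF x] x by (intro exI[of _ "f' x"]) auto
next
  show "continuous_on {a..b} f"
    by (rule continuous_at_imp_continuous_on) (auto intro: DERIV_isCont[OF assms(2)])
qed

lemma QQ_pos_ge: assumes "g > 0" "0 \<le> x" "x \<le> z" "QQ g x > 0" shows "QQ g z > 0"
proof (cases "z = x")
  case False thus ?thesis using assms QQ_pos[of g z] by auto
qed (use assms in auto)

lemma phi_mono: assumes "g > 0" "s > 0" "0 \<le> x" "x < y" "QQ g x > 0"
  shows "phi g s x < phi g s y"
proof (rule incr_on[where f' = "phiD g s", OF assms(4)])
  fix z assume "x \<le> z" "z \<le> y"
  hence "QQ g z > 0" using QQ_pos_ge[OF assms(1,3) _ assms(5)] by auto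
  thus "(phi g s has_real_derivative phiD g s z) (at z)" using phi_deriv assms by auto
next
  fix z assume "x < z" "z < y"
  hence "QQ g z > 0" "0 \<le> z" using QQ_pos_ge[OF assms(1,3) _ assms(5)] assms by auto
  thus "phiD g s z > 0" using phiD_pos assms by auto
qed

lemma phi_inj: assumes "g > 0" "s > 0" "0 < x" "0 < y" "phi g s x = phi g s y" shows "x = y"
proof (rule ccontr)
  assume "x \<noteq> y"
  hence "x < y \<or> y < x" by auto
  thus False using phi_mono[of g s x y] phi_mono[of g s y x] assms QQ_pos[of g x] QQ_pos[of g y] by auto
qed

lemma QQ0: "g \<noteq> 1 \<Longrightarrow> QQ g 0 > 0" unfolding QQ_def by simp

lemma phi0: assumes "g > 0" "g \<noteq> 1"
  shows "phi g s 0 = - s * max 1 g / (1-g)^2"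
proof -
  have S: "SS g 0 = \<bar>1 - g\<bar>" unfolding SS_def QQ_def by simp
  have "1 + g + \<bar>1 - g\<bar> = 2 * max 1 g" by (auto simp: max_def abs_if)
  thus ?thesis unfolding phi_def S QQ_def by (simp add: field_simps)
qed

lemma rho_eq: assumes "g > 0" "g \<noteq> 1" "r2t > 0" "s2t > 0"
  shows "rho_thr g (r2t/s2t) = ereal (phi g (s2t*g/r2t) 0)"
  unfolding rho_thr_def phi0[OF assms(1,2)] using assms by (simp add: field_simps)

lemma phi1_small: assumes "s > 0" "0 < l" "l \<le> 1/2" "l \<le> s/2"
  shows "phi 1 s l \<le> - s/(10*l)"
proof -
  have Q: "QQ 1 l = l^2 + 4*l" unfolding QQ_def by simp
  have Qp: "QQ 1 l > 0" using QQ_pos assms by auto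
  have S: "SS 1 l \<ge> 0" unfolding SS_def using Qp by simp
  have "(l - s)*(l+1+1+SS 1 l) \<le> (l - s)*2" using assms S by (intro mult_left_mono_neg) auto
  also have "\<dots> \<le> -s" using assms by simp
  finally have n: "(l - s)*(l+1+1+SS 1 l) \<le> -s" .
  have "phi 1 s l \<le> -s/(2*QQ 1 l)" unfolding phi_def using divide_right_mono[OF n, of "2*QQ 1 l"] Qp by simp
  also have "\<dots> \<le> -s/(10*l)"
  proof -
    have "2*QQ 1 l \<le> 10*l" unfolding Q using assms by (simp add: power2_eq_square) 
    hence "s/(10*l) \<le> s/(2*QQ 1 l)" using assms Qp by (intro divide_left_mono) auto
    thus ?thesis by simp
  qed
  finally show ?thesis .
qed




lemma root_exists: assumes "g > 0" "s > 0" "g \<noteq> 1 \<Longrightarrow> phi g s 0 < \<zeta>" "\<zeta> < 1"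
  shows "\<exists>l>0. phi g s l = \<zeta>"
proof -
  have "eventually (\<lambda>l. phi g s l > \<zeta>) at_top"
    using order_tendstoD(1)[OF phi_top[OF assms(1)] assms(4)] .
  then obtain N where N: "\<forall>l\<ge>N. phi g s l > \<zeta>" by (auto simp: eventually_at_top_linorder)
  define l2 where "l2 = max N 1"
  have l2: "l2 \<ge> 1" "phi g s l2 > \<zeta>" using N by (auto simp: l2_def)
  obtain l1 where l1: "0 \<le> l1" "l1 < l2" "QQ g l1 > 0" "phi g s l1 < \<zeta>"
  proof (cases "g = 1")
    case True
    define l1 where "l1 = min (1/2) (min (s/2) (s/(10*(\<bar>\<zeta>\<bar>+1))))"
    have l1p: "l1 > 0" "l1 \<le> 1/2" "l1 \<le> s/2" "l1 \<le> s/(10*(\<bar>\<zeta>\<bar>+1))"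
    proof -
      have "s/(10*(\<bar>\<zeta>\<bar>+1)) > 0" using assms by (intro divide_pos_pos) auto
      thus "l1 > 0" using assms unfolding l1_def by auto
      show "l1 \<le> 1/2" unfolding l1_def by (rule min.cobounded1)
      show "l1 \<le> s/2" unfolding l1_def by (meson min.cobounded1 min.coboundedI2)
      show "l1 \<le> s/(10*(\<bar>\<zeta>\<bar>+1))" unfolding l1_def by (meson min.cobounded2 min.coboundedI2)
    qed
    have "phi 1 s l1 \<le> -s/(10*l1)" by (rule phi1_small) (use assms l1p in auto)
    also have "-s/(10*l1) \<le> -(\<bar>\<zeta>\<bar>+1)"
    proof -
      have "10*l1*(\<bar>\<zeta>\<bar>+1) \<le> s" using l1p(1,4) by (simp add: field_simps)
      hence "\<bar>\<zeta>\<bar>+1 \<le> s/(10*l1)" using l1p(1) by (simp add: field_simps)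
      thus ?thesis by simp
    qed
    also have "\<dots> < \<zeta>" by auto
    finally have "phi g s l1 < \<zeta>" using True by simp
    moreover have "QQ g l1 > 0" using QQ_pos assms l1p by auto
    ultimately show ?thesis using that[of l1] l1p l2 by auto
  next
    case False
    thus ?thesis using that[of 0] QQ0 assms l2 by auto
  qed
  have cont: "continuous_on {l1..l2} (phi g s)"
  proof (rule continuous_at_imp_continuous_on, intro ballI)
    fix z assume "z \<in> {l1..l2}"
    hence "QQ g z > 0" using QQ_pos_ge[OF assms(1) l1(1) _ l1(3)] by auto
    thus "isCont (phi g s) z" using phi_deriv[OF assms(1)] DERIV_isCont by blast
  qed
  obtain l where l: "l1 \<le> l" "l \<le> l2" "phi g s l = \<zeta>"
    using IVT'[of "phi g s" l1 \<zeta> l2, OF _ _ _ cont] l1 l2 by auto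
  have "l \<noteq> l1" using l l1 by auto
  thus ?thesis using l l1 by (intro exI[of _ l]) auto
qed

definition Lam :: "real \<Rightarrow> real \<Rightarrow> real \<Rightarrow> real" where
  "Lam g s \<zeta> = (THE l. l > 0 \<and> phi g s l = \<zeta>)"

lemma Lam_prop: assumes "g > 0" "s > 0" "\<exists>l>0. phi g s l = \<zeta>"
  shows "Lam g s \<zeta> > 0 \<and> phi g s (Lam g s \<zeta>) = \<zeta>"
proof -
  have "\<exists>!l. l > 0 \<and> phi g s l = \<zeta>" using assms phi_inj[OF assms(1,2)] by metis
  from theI'[OF this] show ?thesis unfolding Lam_def .
qed

lemma Lam_phi: assumes "g > 0" "s > 0" "z > 0" shows "Lam g s (phi g s z) = z"
  unfolding Lam_def
  by (rule the_equality) (use assms phi_inj[OF assms(1,2)] in auto)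

lemma Lam_deriv: assumes "g > 0" "s > 0" "a < \<zeta>0" "\<zeta>0 < b"
    "\<And>y. a < y \<Longrightarrow> y < b \<Longrightarrow> \<exists>l>0. phi g s l = y"
  shows "\<exists>D. (Lam g s has_real_derivative D) (at \<zeta>0) \<and> D > 0"
proof -
  define l0 where "l0 = Lam g s \<zeta>0"
  have l0: "l0 > 0" "phi g s l0 = \<zeta>0" using Lam_prop[OF assms(1,2) assms(5)[OF assms(3,4)]] l0_def by auto
  have Q0: "QQ g l0 > 0" using QQ_pos assms l0 by auto
  have "isCont (Lam g s) (phi g s l0)"
  proof (rule isCont_inverse_function2[of "l0/2" l0 "l0+1"])
    fix z assume z: "l0/2 \<le> z" "z \<le> l0+1"
    hence "z > 0" using l0 by auto
    thus "Lam g s (phi g s z) = z" using Lam_phi assms by auto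
    show "isCont (phi g s) z" using phi_deriv[OF assms(1) QQ_pos[OF assms(1) \<open>z>0\<close>]] DERIV_isCont by blast
  qed (use l0 in auto)
  hence cont: "isCont (Lam g s) \<zeta>0" using l0 by simp
  have pd: "phiD g s l0 > 0" using phiD_pos assms l0 Q0 by auto
  have "(Lam g s has_real_derivative inverse (phiD g s l0)) (at \<zeta>0)"
  proof (rule DERIV_inverse_function[where a=a and b=b])
    show "(phi g s has_real_derivative phiD g s l0) (at (Lam g s \<zeta>0))"
      using phi_deriv[OF assms(1) Q0] l0_def by simp
    show "phiD g s l0 \<noteq> 0" using pd by simp
    fix y assume "a < y" "y < b"
    thus "phi g s (Lam g s y) = y" using Lam_prop[OF assms(1,2) assms(5)] by auto
  qed (use assms cont in auto)
  thus ?thesis using pd by (intro exI[of _ "inverse (phiD g s l0)"]) auto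
qed




theorem theorem4:
  fixes r2t s2t \<gamma> :: real
  assumes "r2t > 0" and "s2t > 0" and "\<gamma> > 0"
  defines "\<rho> \<equiv> rho_thr \<gamma> (r2t / s2t)"
  shows "\<exists>\<Lambda> :: real \<Rightarrow> real.
     (\<forall>\<zeta>. \<rho> < ereal \<zeta> \<and> \<zeta> < 1 \<longrightarrow>
          \<Lambda> \<zeta> > 0 \<and> (\<exists>D. (\<Lambda> has_real_derivative D) (at \<zeta>) \<and> D > 0)) \<and>
     (\<forall>w2 \<eta>. admissible r2t w2 \<eta> \<longrightarrow>
        (let R = causal_risk \<gamma> r2t s2t w2 \<eta>; \<zeta> = conf_strength r2t w2 \<eta> in
          (ereal \<zeta> \<le> \<rho> \<longrightarrow>
             (\<exists>L. (R \<longlongrightarrow> L) (at_right 0) \<and> (\<forall>lam>0. L < R lam) \<and> \<not> (R \<longlongrightarrow> L) at_top)) \<and>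
          (\<rho> < ereal \<zeta> \<and> \<zeta> < 1 \<longrightarrow>
             (\<forall>lam>0. lam \<noteq> \<Lambda> \<zeta> \<longrightarrow> R (\<Lambda> \<zeta>) < R lam)) \<and>
          (\<zeta> \<ge> 1 \<longrightarrow>
             (\<exists>L. (R \<longlongrightarrow> L) at_top \<and> (\<forall>lam>0. L < R lam) \<and> \<not> (R \<longlongrightarrow> L) (at_right 0)))))"
proof -
  define s where "s = s2t*\<gamma>/r2t"
  have sp: "s > 0" using assms by (simp add: s_def)
  have g: "\<gamma> > 0" using assms by simp
  have rho1: "\<gamma> = 1 \<Longrightarrow> \<rho> = -\<infinity>" unfolding \<rho>_def rho_thr_def by simp
  have rho2: "\<gamma> \<noteq> 1 \<Longrightarrow> \<rho> = ereal (phi \<gamma> s 0)"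
    unfolding \<rho>_def s_def using rho_eq assms by auto
  have range: "\<exists>l>0. phi \<gamma> s l = \<zeta>" if "\<rho> < ereal \<zeta>" "\<zeta> < 1" for \<zeta>
  proof (rule root_exists[OF g sp _ that(2)])
    assume "\<gamma> \<noteq> 1" thus "phi \<gamma> s 0 < \<zeta>" using rho2 that(1) by auto
  qed
  define \<Lambda> where "\<Lambda> = Lam \<gamma> s"
  show ?thesis
  proof (rule exI[of _ \<Lambda>], rule conjI)
    show "\<forall>\<zeta>. \<rho> < ereal \<zeta> \<and> \<zeta> < 1 \<longrightarrow>
          \<Lambda> \<zeta> > 0 \<and> (\<exists>D. (\<Lambda> has_real_derivative D) (at \<zeta>) \<and> D > 0)"
    proof (intro allI impI conjI)
      fix \<zeta> assume z: "\<rho> < ereal \<zeta> \<and> \<zeta> < 1"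
      show "\<Lambda> \<zeta> > 0" using Lam_prop[OF g sp range] z \<Lambda>_def by auto
      define a where "a = (if \<gamma> = 1 then \<zeta> - 1 else phi \<gamma> s 0)"
      have a: "a < \<zeta>" using z rho2 by (auto simp: a_def)
      show "\<exists>D. (\<Lambda> has_real_derivative D) (at \<zeta>) \<and> D > 0"
        unfolding \<Lambda>_def
      proof (rule Lam_deriv[OF g sp a])
        show "\<zeta> < 1" using z by simp
        fix y assume y: "a < y" "y < 1"
        have "\<rho> < ereal y" using y rho1 rho2 by (cases "\<gamma> = 1") (auto simp: a_def)
        thus "\<exists>l>0. phi \<gamma> s l = y" using range y by auto
      qed
    qed
  next
    show "\<forall>w2 \<eta>. admissible r2t w2 \<eta> \<longrightarrow>
        (let R = causal_risk \<gamma> r2t s2t w2 \<eta>; \<zeta> = conf_strength r2t w2 \<eta> in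
          (ereal \<zeta> \<le> \<rho> \<longrightarrow>
             (\<exists>L. (R \<longlongrightarrow> L) (at_right 0) \<and> (\<forall>lam>0. L < R lam) \<and> \<not> (R \<longlongrightarrow> L) at_top)) \<and>
          (\<rho> < ereal \<zeta> \<and> \<zeta> < 1 \<longrightarrow>
             (\<forall>lam>0. lam \<noteq> \<Lambda> \<zeta> \<longrightarrow> R (\<Lambda> \<zeta>) < R lam)) \<and>
          (\<zeta> \<ge> 1 \<longrightarrow>
             (\<exists>L. (R \<longlongrightarrow> L) at_top \<and> (\<forall>lam>0. L < R lam) \<and> \<not> (R \<longlongrightarrow> L) (at_right 0))))"
    proof (intro allI impI)
      fix w2 \<eta> assume "admissible r2t w2 \<eta>"
      define R where "R = causal_risk \<gamma> r2t s2t w2 \<eta>"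
      define \<zeta> where "\<zeta> = conf_strength r2t w2 \<eta>"
      define E where "E = EE \<gamma> r2t s2t w2 \<eta>"
      define Dv where "Dv = (\<lambda>l. 2*r2t*G1 \<gamma> l*(phi \<gamma> s l - \<zeta>))"
      have Ed: "(E has_real_derivative Dv l) (at l)" if "QQ \<gamma> l > 0" for l
        using EE_deriv[OF g that assms(1), of s2t w2 \<eta>]
        unfolding E_def Dv_def s_def \<zeta>_def conf_strength_def by simp
      have RE: "R l = E l" if "l > 0" for l
        unfolding R_def E_def using risk_eq[OF g that] by simp
      have Dpos: "Dv l > 0" if "0 \<le> l" "QQ \<gamma> l > 0" "phi \<gamma> s l > \<zeta>" for l
        unfolding Dv_def using G1_pos[OF g that(1,2)] that(3) assms(1) by simp
      have Dneg: "Dv l < 0" if "0 \<le> l" "QQ \<gamma> l > 0" "phi \<gamma> s l < \<zeta>" for l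
        unfolding Dv_def using G1_pos[OF g that(1,2)] that(3) assms(1) by (simp add: mult_pos_neg)
      have c1: "ereal \<zeta> \<le> \<rho> \<longrightarrow>
             (\<exists>L. (R \<longlongrightarrow> L) (at_right 0) \<and> (\<forall>lam>0. L < R lam) \<and> \<not> (R \<longlongrightarrow> L) at_top)"
      proof
        assume z: "ereal \<zeta> \<le> \<rho>"
        have g1: "\<gamma> \<noteq> 1" using z rho1 by auto
        have z0: "\<zeta> \<le> phi \<gamma> s 0" using z rho2[OF g1] by simp
        have Q0: "QQ \<gamma> 0 > 0" using QQ0[OF g1] .
        have inc: "E x < E y" if "0 \<le> x" "x < y" for x y
        proof (rule incr_on[where f'=Dv, OF that(2)])
          fix z assume "x \<le> z" "z \<le> y"
          hence "QQ \<gamma> z > 0" using QQ_pos_ge[OF g _ _ Q0] that by auto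
          thus "(E has_real_derivative Dv z) (at z)" by (rule Ed)
        next
          fix z assume zz: "x < z" "z < y"
          hence "QQ \<gamma> z > 0" "0 \<le> z" using QQ_pos_ge[OF g _ _ Q0] that by auto
          moreover have "phi \<gamma> s z > \<zeta>" using phi_mono[OF g sp _ _ Q0, of z] zz that z0 by auto
          ultimately show "Dv z > 0" using Dpos by auto
        qed
        have "isCont E 0" using Ed[OF Q0] DERIV_isCont by blast
        hence "(E \<longlongrightarrow> E 0) (at_right 0)" unfolding isCont_def
          by (rule tendsto_within_subset) auto
        moreover have "eventually (\<lambda>x. R x = E x) (at_right 0)"
          using eventually_at_right_less[of "0::real"] by (rule eventually_mono) (simp add: RE)
        hence "(R \<longlongrightarrow> E 0) (at_right 0) = (E \<longlongrightarrow> E 0) (at_right 0)" by (rule tendsto_cong)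
        ultimately have lim: "(R \<longlongrightarrow> E 0) (at_right 0)" by simp
        have lt: "\<forall>lam>0. E 0 < R lam"
        proof (intro allI impI)
          fix lam :: real assume "lam > 0"
          thus "E 0 < R lam" using inc[of 0 lam] RE[of lam] by simp
        qed
        have nt: "\<not> (R \<longlongrightarrow> E 0) at_top"
        proof
          assume "(R \<longlongrightarrow> E 0) at_top"
          moreover have "eventually (\<lambda>x. R 1 \<le> R x) at_top"
            using eventually_ge_at_top[of "1::real"]
          proof eventually_elim
            case (elim x)
            show ?case
            proof (cases "x = 1")
              case False thus ?thesis using inc[of 1 x] RE[of 1] RE[of x] elim by simp
            qed simp
          qed
          ultimately have "R 1 \<le> E 0" by (rule tendsto_lowerbound) simp
          moreover have "E 0 < R 1" using lt by simp
          ultimately show False by simp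
        qed
        show "\<exists>L. (R \<longlongrightarrow> L) (at_right 0) \<and> (\<forall>lam>0. L < R lam) \<and> \<not> (R \<longlongrightarrow> L) at_top"
          using lim lt nt by blast
      qed
      have c2: "\<rho> < ereal \<zeta> \<and> \<zeta> < 1 \<longrightarrow>
             (\<forall>lam>0. lam \<noteq> \<Lambda> \<zeta> \<longrightarrow> R (\<Lambda> \<zeta>) < R lam)"
      proof (intro impI allI)
        fix lam assume z: "\<rho> < ereal \<zeta> \<and> \<zeta> < 1" and lam: "lam > 0" "lam \<noteq> \<Lambda> \<zeta>"
        define l0 where "l0 = \<Lambda> \<zeta>"
        have l0: "l0 > 0" "phi \<gamma> s l0 = \<zeta>" using Lam_prop[OF g sp range] z unfolding l0_def \<Lambda>_def by auto
        show "R (\<Lambda> \<zeta>) < R lam"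
        proof (cases "lam > l0")
          case True
          have "E l0 < E lam"
          proof (rule incr_on[where f'=Dv, OF True])
            fix z assume "l0 \<le> z" "z \<le> lam"
            hence "QQ \<gamma> z > 0" using QQ_pos[OF g] l0 by auto
            thus "(E has_real_derivative Dv z) (at z)" by (rule Ed)
          next
            fix z assume zz: "l0 < z" "z < lam"
            hence "QQ \<gamma> z > 0" "0 \<le> z" using QQ_pos[OF g] l0 by auto
            moreover have "phi \<gamma> s z > \<zeta>" using phi_mono[OF g sp _ zz(1)] l0 QQ_pos[OF g l0(1)] by auto
            ultimately show "Dv z > 0" using Dpos by auto
          qed
          thus ?thesis using RE l0 lam unfolding l0_def by auto
        next
          case False
          hence lt: "lam < l0" using lam unfolding l0_def by auto
          have "E lam > E l0"
          proof (rule decr_on[where f'=Dv, OF lt])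
            fix z assume "lam \<le> z" "z \<le> l0"
            hence "QQ \<gamma> z > 0" using QQ_pos[OF g] lam by auto
            thus "(E has_real_derivative Dv z) (at z)" by (rule Ed)
          next
            fix z assume zz: "lam < z" "z < l0"
            hence zq: "QQ \<gamma> z > 0" "0 \<le> z" using QQ_pos[OF g] lam by auto
            moreover have "phi \<gamma> s z < \<zeta>" using phi_mono[OF g sp _ zz(2)] l0 zq by auto
            ultimately show "Dv z < 0" using Dneg by auto
          qed
          thus ?thesis using RE l0 lam unfolding l0_def by auto
        qed
      qed
      have c3: "\<zeta> \<ge> 1 \<longrightarrow>
             (\<exists>L. (R \<longlongrightarrow> L) at_top \<and> (\<forall>lam>0. L < R lam) \<and> \<not> (R \<longlongrightarrow> L) (at_right 0))"
      proof
        assume z: "\<zeta> \<ge> 1"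
        have dec: "E x > E y" if "0 < x" "x < y" for x y
        proof (rule decr_on[where f'=Dv, OF that(2)])
          fix z assume "x \<le> z" "z \<le> y"
          hence "QQ \<gamma> z > 0" using QQ_pos[OF g] that by auto
          thus "(E has_real_derivative Dv z) (at z)" by (rule Ed)
        next
          fix z assume zz: "x < z" "z < y"
          hence zq: "QQ \<gamma> z > 0" "0 < z" using QQ_pos[OF g] that by auto
          moreover have "phi \<gamma> s z < \<zeta>" using phi_lt1[OF g sp zq(2)] z by auto
          ultimately show "Dv z < 0" using Dneg by auto
        qed
        define L where "L = 2*w2 + s2t + r2t - 2*(w2+\<eta>)"
        have "eventually (\<lambda>x. R x = E x) at_top"
          using eventually_gt_at_top[of "0::real"] by (rule eventually_mono) (simp add: RE)
        hence "(R \<longlongrightarrow> L) at_top = (E \<longlongrightarrow> L) at_top" by (rule tendsto_cong)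
        moreover have "(E \<longlongrightarrow> L) at_top" unfolding E_def L_def by (rule EE_top[OF g])
        ultimately have lim: "(R \<longlongrightarrow> L) at_top" by simp
        have lt: "L < R lam" if "lam > 0" for lam
        proof -
          have "eventually (\<lambda>x. R x \<le> R (lam+1)) at_top"
            using eventually_ge_at_top[of "lam+1"]
          proof eventually_elim
            case (elim x)
            show ?case
            proof (cases "x = lam+1")
              case False thus ?thesis using dec[of "lam+1" x] RE[of x] RE[of "lam+1"] that elim by simp
            qed simp
          qed
          from tendsto_upperbound[OF lim this] have "L \<le> R (lam+1)" by simp
          also have "R (lam+1) < R lam" using dec[of lam "lam+1"] RE that by auto
          finally show ?thesis .
        qed
        have nt: "\<not> (R \<longlongrightarrow> L) (at_right 0)"
        proof
          assume "(R \<longlongrightarrow> L) (at_right 0)"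
          moreover have "eventually (\<lambda>x. R 1 \<le> R x) (at_right 0)"
            unfolding eventually_at_right_field[of _ "0::real"]
          proof (intro exI[of _ 1] conjI allI impI)
            fix x :: real assume "0 < x" "x < 1"
            thus "R 1 \<le> R x" using dec[of x 1] RE[of x] RE[of 1] by simp
          qed simp
          ultimately have "R 1 \<le> L" by (rule tendsto_lowerbound) simp
          moreover have "L < R 1" using lt[of 1] by simp
          ultimately show False by simp
        qed
        show "\<exists>L. (R \<longlongrightarrow> L) at_top \<and> (\<forall>lam>0. L < R lam) \<and> \<not> (R \<longlongrightarrow> L) (at_right 0)"
          using lim lt nt by blast
      qed
      show "let R = causal_risk \<gamma> r2t s2t w2 \<eta>; \<zeta> = conf_strength r2t w2 \<eta> in
          (ereal \<zeta> \<le> \<rho> \<longrightarrow>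
             (\<exists>L. (R \<longlongrightarrow> L) (at_right 0) \<and> (\<forall>lam>0. L < R lam) \<and> \<not> (R \<longlongrightarrow> L) at_top)) \<and>
          (\<rho> < ereal \<zeta> \<and> \<zeta> < 1 \<longrightarrow>
             (\<forall>lam>0. lam \<noteq> \<Lambda> \<zeta> \<longrightarrow> R (\<Lambda> \<zeta>) < R lam)) \<and>
          (\<zeta> \<ge> 1 \<longrightarrow>
             (\<exists>L. (R \<longlongrightarrow> L) at_top \<and> (\<forall>lam>0. L < R lam) \<and> \<not> (R \<longlongrightarrow> L) (at_right 0)))"
        unfolding Let_def R_def[symmetric] \<zeta>_def[symmetric] using c1 c2 c3 by blast
    qed
  qed
qed


end
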